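(* Let $(f,p)$ be a DSIC one-player mechanism with quasi-linear additive utilities on $m$ items, and let $G_f$ be its allocation network. Let $C=(a^{(1)},\dots,a^{(k)}=a^{(1)})$ be a cycle in $G_f$ such that $Q_{a^{(j)}}\cap Q_{a^{(j+1)}}\neq\emptyset$ for every $j\in[k-1]$. Then the length $\sum_{j=1}^{k-1}\ell(a^{(j)},a^{(j+1)})$ of $C$ equals $0$.
   Context: Types $\theta\in\Theta\subseteq\mathbb R^m$, allocations $a\in\{0,1\}^m$, allocation function $f:\Theta\to\{0,1\}^m$, payment $p:\Theta\to\mathbb R$; DSIC means $\theta\cdot f(\theta)-p(\theta)\ge\theta\cdot f(\theta')-p(\theta')$ for all $\theta,\theta'\in\Theta$. $R_a=\{\theta\in\Theta:f(\theta)=a\}$ and $Q_a=\mathrm{cl}(R_a)$. The allocation network $G_f$ is the complete directed graph on node set $\{0,1\}^m$ with arc lengths $\ell(a,a')=\inf_{\theta\in R_{a'}}\{\theta\cdot a'-\theta\cdot a\}$. *)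

theory Defs
  imports "HOL-Analysis.Analysis"
begin

text \<open>Types are vectors in real^'m (m = CARD('m) items). Allocations are 0/1 vectors in real^'m.\<close>

definition allocations :: "(real^'m) set" where
  "allocations = {a. \<forall>i. a $ i \<in> {0, 1}}"

definition DSIC :: "(real^'m) set \<Rightarrow> (real^'m \<Rightarrow> real^'m) \<Rightarrow> (real^'m \<Rightarrow> real) \<Rightarrow> bool" where
  "DSIC \<Theta> f p \<longleftrightarrow> (\<forall>\<theta>\<in>\<Theta>. \<forall>\<theta>'\<in>\<Theta>. \<theta> \<bullet> f \<theta> - p \<theta> \<ge> \<theta> \<bullet> f \<theta>' - p \<theta>')"

definition alloc_region :: "(real^'m) set \<Rightarrow> (real^'m \<Rightarrow> real^'m) \<Rightarrow> real^'m \<Rightarrow> (real^'m) set" where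
  "alloc_region \<Theta> f a = {\<theta>\<in>\<Theta>. f \<theta> = a}"

definition alloc_region_cl :: "(real^'m) set \<Rightarrow> (real^'m \<Rightarrow> real^'m) \<Rightarrow> real^'m \<Rightarrow> (real^'m) set" where
  "alloc_region_cl \<Theta> f a = closure (alloc_region \<Theta> f a)"

text \<open>Arc length of the allocation network; infimum in the extended reals (empty infimum = +infinity).\<close>
definition arc_length :: "(real^'m) set \<Rightarrow> (real^'m \<Rightarrow> real^'m) \<Rightarrow> real^'m \<Rightarrow> real^'m \<Rightarrow> ereal" where
  "arc_length \<Theta> f a a' = (INF \<theta>\<in>alloc_region \<Theta> f a'. ereal (\<theta> \<bullet> a' - \<theta> \<bullet> a))"

end

theory Submission
  imports Defs
begin

lemma price_const:
  assumes dsic: "DSIC \<Theta> f p" and t: "t \<in> alloc_region \<Theta> f c" and s: "s \<in> alloc_region \<Theta> f c"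
  shows "p t = p s"
proof -
  have tt: "t \<in> \<Theta>" "s \<in> \<Theta>" using t s unfolding alloc_region_def by auto
  have "t \<bullet> f t - p t \<ge> t \<bullet> f s - p s" "s \<bullet> f s - p s \<ge> s \<bullet> f t - p t"
    using dsic tt unfolding DSIC_def by auto
  moreover have "f t = f s" using t s unfolding alloc_region_def by auto
  ultimately show ?thesis by simp
qed

definition PR :: "(real^'m) set \<Rightarrow> (real^'m \<Rightarrow> real^'m) \<Rightarrow> (real^'m \<Rightarrow> real) \<Rightarrow> real^'m \<Rightarrow> real" where
  "PR \<Theta> f p c = p (SOME t. t \<in> alloc_region \<Theta> f c)"

lemma PR_eq:
  assumes dsic: "DSIC \<Theta> f p" and t: "t \<in> alloc_region \<Theta> f c"
  shows "p t = PR \<Theta> f p c"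
  unfolding PR_def by (rule price_const[OF dsic t someI[of "\<lambda>t. t \<in> alloc_region \<Theta> f c" t, OF t]])

lemma arc_eq:
  assumes dsic: "DSIC \<Theta> f p"
    and x: "x \<in> alloc_region_cl \<Theta> f a" "x \<in> alloc_region_cl \<Theta> f b"
  shows "arc_length \<Theta> f a b = ereal (PR \<Theta> f p b - PR \<Theta> f p a)"
proof -
  let ?c = "PR \<Theta> f p b - PR \<Theta> f p a"
  have Ra: "alloc_region \<Theta> f a \<noteq> {}" using x(1) unfolding alloc_region_cl_def by auto
  then obtain t0 where t0: "t0 \<in> alloc_region \<Theta> f a" by auto
  have ineq: "\<theta> \<bullet> b - \<theta> \<bullet> a \<ge> ?c" if th: "\<theta> \<in> alloc_region \<Theta> f b" for \<theta>
  proof -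
    have "\<theta> \<bullet> f \<theta> - p \<theta> \<ge> \<theta> \<bullet> f t0 - p t0"
      using dsic th t0 unfolding DSIC_def alloc_region_def by auto
    moreover have "f \<theta> = b" "f t0 = a" using th t0 unfolding alloc_region_def by auto
    moreover note PR_eq[OF dsic th] PR_eq[OF dsic t0]
    ultimately show ?thesis by (simp add: algebra_simps)
  qed
  have ge: "ereal ?c \<le> arc_length \<Theta> f a b"
    unfolding arc_length_def by (rule INF_greatest) (use ineq in auto)
  have ineq2: "\<theta> \<bullet> b - \<theta> \<bullet> a \<le> ?c" if th: "\<theta> \<in> alloc_region \<Theta> f a" for \<theta>
  proof -
    obtain t1 where t1: "t1 \<in> alloc_region \<Theta> f b" using x(2) unfolding alloc_region_cl_def
      by (metis closure_empty empty_iff ex_in_conv)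
    have "\<theta> \<bullet> f \<theta> - p \<theta> \<ge> \<theta> \<bullet> f t1 - p t1"
      using dsic th t1 unfolding DSIC_def alloc_region_def by auto
    moreover have "f \<theta> = a" "f t1 = b" using th t1 unfolding alloc_region_def by auto
    moreover note PR_eq[OF dsic th] PR_eq[OF dsic t1]
    ultimately show ?thesis by (simp add: algebra_simps)
  qed
  have cl1: "closed {\<theta>. \<theta> \<bullet> b - \<theta> \<bullet> a \<le> ?c}"
    by (intro closed_Collect_le continuous_intros)
  have "alloc_region \<Theta> f a \<subseteq> {\<theta>. \<theta> \<bullet> b - \<theta> \<bullet> a \<le> ?c}" using ineq2 by auto
  hence "x \<in> {\<theta>. \<theta> \<bullet> b - \<theta> \<bullet> a \<le> ?c}"
    using x(1) cl1 unfolding alloc_region_cl_def by (meson closure_minimal subsetD)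
  hence gx: "x \<bullet> b - x \<bullet> a \<le> ?c" by simp
  have le: "arc_length \<Theta> f a b \<le> ereal ?c"
  proof (rule ccontr)
    assume "\<not> ?thesis"
    hence "ereal ?c < arc_length \<Theta> f a b" by simp
    then obtain r where r: "ereal ?c < ereal r" "ereal r < arc_length \<Theta> f a b"
      using ereal_dense2 by blast
    have "\<theta> \<bullet> b - \<theta> \<bullet> a \<ge> r" if th: "\<theta> \<in> alloc_region \<Theta> f b" for \<theta>
    proof -
      have "arc_length \<Theta> f a b \<le> ereal (\<theta> \<bullet> b - \<theta> \<bullet> a)"
        unfolding arc_length_def by (rule INF_lower[OF th])
      with r(2) have "ereal r < ereal (\<theta> \<bullet> b - \<theta> \<bullet> a)" by (rule less_le_trans)
      thus ?thesis by simp
    qed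
    hence "alloc_region \<Theta> f b \<subseteq> {\<theta>. r \<le> \<theta> \<bullet> b - \<theta> \<bullet> a}" by auto
    moreover have "closed {\<theta>. r \<le> \<theta> \<bullet> b - \<theta> \<bullet> a}"
      by (intro closed_Collect_le continuous_intros)
    ultimately have "x \<in> {\<theta>. r \<le> \<theta> \<bullet> b - \<theta> \<bullet> a}"
      using x(2) unfolding alloc_region_cl_def by (meson closure_minimal subsetD)
    with gx r(1) show False by simp
  qed
  from ge le show ?thesis by simp
qed

theorem proposition3p4:
  fixes \<Theta> :: "(real^'m) set" and f :: "real^'m \<Rightarrow> real^'m" and p :: "real^'m \<Rightarrow> real"
    and a :: "nat \<Rightarrow> real^'m" and k :: nat
  assumes alloc: "\<forall>\<theta>\<in>\<Theta>. f \<theta> \<in> allocations"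
    and dsic: "DSIC \<Theta> f p"
    and nodes: "\<forall>j\<in>{1..k}. a j \<in> allocations"
    and cyc: "a k = a 1"
    and inter: "\<forall>j\<in>{1..k-1}. alloc_region_cl \<Theta> f (a j) \<inter> alloc_region_cl \<Theta> f (a (j+1)) \<noteq> {}"
  shows "(\<Sum>j\<in>{1..k-1}. arc_length \<Theta> f (a j) (a (j+1))) = 0"
proof (cases "k = 0")
  case True thus ?thesis by simp
next
  case False
  let ?P = "\<lambda>j. PR \<Theta> f p (a j)"
  have "(\<Sum>j\<in>{1..k-1}. arc_length \<Theta> f (a j) (a (j+1))) = (\<Sum>j\<in>{1..k-1}. ereal (?P (Suc j) - ?P j))"
  proof (rule sum.cong[OF refl])
    fix j assume j: "j \<in> {1..k-1}"
    then obtain x where "x \<in> alloc_region_cl \<Theta> f (a j)" "x \<in> alloc_region_cl \<Theta> f (a (j+1))"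
      using inter by blast
    thus "arc_length \<Theta> f (a j) (a (j+1)) = ereal (?P (Suc j) - ?P j)"
      using arc_eq[OF dsic] by simp
  qed
  also have "\<dots> = ereal (\<Sum>j\<in>{1..k-1}. ?P (Suc j) - ?P j)" by (simp add: sum_ereal)
  also have "(\<Sum>j\<in>{1..k-1}. ?P (Suc j) - ?P j) = ?P (Suc (k-1)) - ?P 1"
    by (rule sum_Suc_diff) (use False in simp)
  also have "\<dots> = 0" using False cyc by simp
  finally show ?thesis by (simp add: zero_ereal_def)
qed

end
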